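(* Let $W\in\mathbb{R}^{m\times n}$, $x_1,x_2\in\mathbb{R}^n$, $\ell(t)=(1-t)x_1+tx_2$, and let $0=t_1\le t_2\le\dots\le t_{n_t}=1$. Writing $x_{t_k}=\ell(t_k)$, we have $$\sum_{k=1}^{n_t-1}\|\operatorname{ReLU}(Wx_{t_k})-\operatorname{ReLU}(Wx_{t_{k+1}})\|_2^2\le\|\operatorname{ReLU}(Wx_1)-\operatorname{ReLU}(Wx_2)\|_2^2$$ and $$\sum_{k=1}^{n_t-1}\|\operatorname{ReLU}(Wx_{t_k})-\operatorname{ReLU}(Wx_{t_{k+1}})\|_2\le\sqrt{n_t}\,\|\operatorname{ReLU}(Wx_1)-\operatorname{ReLU}(Wx_2)\|_2.$$
   Context: $\operatorname{ReLU}(y)=\max(y,0)$ applied componentwise. *)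

theory Defs
  imports "HOL-Analysis.Analysis"
begin

definition relu :: "real ^ 'm \<Rightarrow> real ^ 'm" where
  "relu y = (\<chi> i. max (y $ i) 0)"

definition seg :: "real ^ 'n \<Rightarrow> real ^ 'n \<Rightarrow> real \<Rightarrow> real ^ 'n" where
  "seg x1 x2 t = (1 - t) *\<^sub>R x1 + t *\<^sub>R x2"

end

theory Submission
  imports Defs
begin

lemma mono_sq_sum:
  fixes u :: "nat \<Rightarrow> real"
  assumes "\<And>k. 1 \<le> k \<Longrightarrow> k < N \<Longrightarrow> u k \<le> u (Suc k)" and "1 \<le> N"
  shows "(\<Sum>k=1..N-1. (u k - u (Suc k))\<^sup>2) \<le> (u 1 - u N)\<^sup>2 \<and> u 1 \<le> u N"
  using assms
proof (induction N)
  case 0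
  then show ?case by simp
next
  case (Suc n)
  show ?case
  proof (cases "n = 0")
    case True
    then show ?thesis by simp
  next
    case False
  have IH: "(\<Sum>k=1..n-1. (u k - u (Suc k))\<^sup>2) \<le> (u 1 - u n)\<^sup>2 \<and> u 1 \<le> u n"
    using Suc False by auto
  have m: "u n \<le> u (Suc n)" using Suc False by auto
  have "{1..Suc n - 1} = insert n {1..n-1}" using False by auto
  then have "(\<Sum>k=1..Suc n-1. (u k - u (Suc k))\<^sup>2) = (u n - u (Suc n))\<^sup>2 + (\<Sum>k=1..n-1. (u k - u (Suc k))\<^sup>2)"
    using False by simp
  also have "\<dots> \<le> (u n - u (Suc n))\<^sup>2 + (u 1 - u n)\<^sup>2" using IH by simp
  also have "\<dots> \<le> (u 1 - u (Suc n))\<^sup>2" using IH m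
  proof -
    have e: "(u 1 - u (Suc n))\<^sup>2 = (u n - u (Suc n))\<^sup>2 + (u 1 - u n)\<^sup>2 + 2*((u n - u 1)*(u (Suc n) - u n))"
      by algebra
    have "0 \<le> (u n - u 1)*(u (Suc n) - u n)" using IH m by simp
    then show ?thesis unfolding e by linarith
  qed
  finally show ?thesis using IH m by simp
  qed
qed

lemma mono_sq_sum2:
  fixes u :: "nat \<Rightarrow> real"
  assumes "(\<forall>k. 1 \<le> k \<longrightarrow> k < N \<longrightarrow> u k \<le> u (Suc k)) \<or> (\<forall>k. 1 \<le> k \<longrightarrow> k < N \<longrightarrow> u (Suc k) \<le> u k)"
    and "1 \<le> N"
  shows "(\<Sum>k=1..N-1. (u k - u (Suc k))\<^sup>2) \<le> (u 1 - u N)\<^sup>2"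
  using assms(1)
proof
  assume "\<forall>k. 1 \<le> k \<longrightarrow> k < N \<longrightarrow> u k \<le> u (Suc k)"
  then show ?thesis using mono_sq_sum[of N u] assms(2) by auto
next
  assume "\<forall>k. 1 \<le> k \<longrightarrow> k < N \<longrightarrow> u (Suc k) \<le> u k"
  then have "(\<Sum>k=1..N-1. ((-u) k - (-u) (Suc k))\<^sup>2) \<le> ((-u) 1 - (-u) N)\<^sup>2"
    using mono_sq_sum[of N "-u"] assms(2) by auto
  then show ?thesis by (simp add: power2_commute)
qed

lemma seg_comp:
  "(W *v seg x1 x2 s) $ i = (1 - s) * (W *v x1) $ i + s * (W *v x2) $ i"
  by (simp add: seg_def matrix_vector_right_distrib matrix_vector_mult_scaleR)

lemma norm_sq_vec: "(norm (x :: real ^ 'm))\<^sup>2 = (\<Sum>i\<in>UNIV. (x $ i)\<^sup>2)"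
  by (simp only: power2_norm_eq_inner inner_vec_def) (simp add: power2_eq_square)

theorem lemma15:
  fixes W :: "real ^ 'n ^ 'm" and x1 x2 :: "real ^ 'n"
    and t :: "nat \<Rightarrow> real" and N :: nat
  assumes "t 1 = 0" and "t N = 1"
    and "\<And>k. 1 \<le> k \<Longrightarrow> k < N \<Longrightarrow> t k \<le> t (Suc k)"
  shows "(\<Sum>k=1..N-1. (norm (relu (W *v seg x1 x2 (t k)) - relu (W *v seg x1 x2 (t (Suc k)))))\<^sup>2)
           \<le> (norm (relu (W *v x1) - relu (W *v x2)))\<^sup>2
      \<and> (\<Sum>k=1..N-1. norm (relu (W *v seg x1 x2 (t k)) - relu (W *v seg x1 x2 (t (Suc k)))))
           \<le> sqrt (real N) * norm (relu (W *v x1) - relu (W *v x2))"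
proof -
  define v where "v k = relu (W *v seg x1 x2 (t k))" for k
  define D where "D = norm (relu (W *v x1) - relu (W *v x2))"
  have first: "(\<Sum>k=1..N-1. (norm (v k - v (Suc k)))\<^sup>2) \<le> D\<^sup>2"
  proof (cases "1 \<le> N")
    case False
    then show ?thesis by simp
  next
    case N: True
    have ends: "v 1 = relu (W *v x1)" "v N = relu (W *v x2)"
      using assms(1,2) by (simp_all add: v_def seg_def)
    have coord: "(\<Sum>k=1..N-1. (v k $ i - v (Suc k) $ i)\<^sup>2) \<le> (v 1 $ i - v N $ i)\<^sup>2" for i
    proof (rule mono_sq_sum2[OF _ N])
      define a where "a = (W *v x1) $ i"
      define b where "b = (W *v x2) $ i"
      have vi: "v k $ i = max ((1 - t k) * a + t k * b) 0" for k
        by (simp add: v_def relu_def seg_comp a_def b_def)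
      show "(\<forall>k. 1 \<le> k \<longrightarrow> k < N \<longrightarrow> v k $ i \<le> v (Suc k) $ i) \<or>
            (\<forall>k. 1 \<le> k \<longrightarrow> k < N \<longrightarrow> v (Suc k) $ i \<le> v k $ i)"
      proof (cases "a \<le> b")
        case True
        have "v k $ i \<le> v (Suc k) $ i" if "1 \<le> k" "k < N" for k
        proof -
          have h: "t k \<le> t (Suc k)" using assms(3) that by auto
          have "(1 - t k) * a + t k * b \<le> (1 - t (Suc k)) * a + t (Suc k) * b"
            using mult_right_mono[OF h, of "b - a"] True by (simp add: algebra_simps)
          then show ?thesis unfolding vi by linarith
        qed
        then show ?thesis by blast
      next
        case False
        have "v (Suc k) $ i \<le> v k $ i" if "1 \<le> k" "k < N" for k
        proof -
          have h: "t k \<le> t (Suc k)" using assms(3) that by auto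
          have "(1 - t (Suc k)) * a + t (Suc k) * b \<le> (1 - t k) * a + t k * b"
            using mult_right_mono[OF h, of "a - b"] False by (simp add: algebra_simps)
          then show ?thesis unfolding vi by linarith
        qed
        then show ?thesis by blast
      qed
    qed
    have "(\<Sum>k=1..N-1. (norm (v k - v (Suc k)))\<^sup>2) = (\<Sum>i\<in>UNIV. \<Sum>k=1..N-1. (v k $ i - v (Suc k) $ i)\<^sup>2)"
      by (simp add: norm_sq_vec sum.swap[of _ UNIV])
    also have "\<dots> \<le> (\<Sum>i\<in>UNIV. (v 1 $ i - v N $ i)\<^sup>2)"
      by (rule sum_mono) (rule coord)
    also have "\<dots> = D\<^sup>2" by (simp only: D_def norm_sq_vec ends) simp
    finally show ?thesis .
  qed
  have second: "(\<Sum>k=1..N-1. norm (v k - v (Suc k))) \<le> sqrt (real N) * D"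
  proof -
    let ?S = "\<Sum>k=1..N-1. norm (v k - v (Suc k))"
    have "?S\<^sup>2 \<le> (\<Sum>k=1..N-1. (norm (v k - v (Suc k)))\<^sup>2) * real (card {1..N-1})"
      by (rule sum_squared_le_sum_of_squares)
    also have "\<dots> \<le> D\<^sup>2 * real N"
      by (rule mult_mono[OF first]) (auto simp: sum_nonneg)
    finally have "?S\<^sup>2 \<le> (sqrt (real N) * D)\<^sup>2"
      by (simp add: power_mult_distrib mult.commute)
    moreover have "0 \<le> sqrt (real N) * D" by (simp add: D_def)
    ultimately show ?thesis by (rule power2_le_imp_le)
  qed
  show ?thesis using first second unfolding v_def D_def by simp
qed

end
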